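(* In the setting below, assume $K_1:\mathbb{C}^V\to\mathbb{C}^{R\times S}$ is injective and let $\mathcal K_1:\mathbb{C}^{R\times S}\to\mathbb{C}^V$ be a linear left inverse of $K_1$ (e.g. the Moore–Penrose pseudoinverse), with $\mathcal K_j$, $j\ge2$, defined by the recursion below. Let $N\ge1$ and $0<a<1$. Then there is a constant $C_{N,a}$ (depending on $N,a$ and on $p,\alpha_0,G_0,\mathcal K_1$, but not on $\eta$) such that for every $\eta\in\mathbb{C}^V$ with $\mu_p\|\eta\|_p<a$, with scattering data $\phi=\sum_{j\ge1}K_j(\eta,\dots,\eta)$, $$\Big\|\eta-\sum_{j=1}^N\mathcal K_j(\phi,\dots,\phi)\Big\|_p\le C_{N,a}\,\|\eta\|_p^{N+1}.$$
   Context: Setting: Let $V$ and $\delta V$ be finite disjoint sets (interior and boundary vertices of a graph), let $R,S\subseteq\delta V$ be nonempty (receivers and sources), let $\alpha_0>0$, and let $G_0$ (the background Green's function) be a complex matrix with rows and columns indexed by $V\cup\delta V$. For $U,W\subseteq V\cup\delta V$, $G_0^{U;W}$ is the submatrix with rows indexed by $U$ and columns by $W$. For $a\in\mathbb{C}^V$, $D_a$ is the diagonal $V\times V$ matrix with diagonal $a$. For $j\ge1$ define the multilinear map $K_j:(\mathbb{C}^V)^j\to\mathbb{C}^{R\times S}$ by $$K_j(\eta_1,\dots,\eta_j)(r,s)=(-1)^{j+1}\alpha_0^{\,j}\,G_0^{r;V}D_{\eta_1}G_0^{V;V}D_{\eta_2}\cdots G_0^{V;V}D_{\eta_j}G_0^{V;s},\qquad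 r\in R,\ s\in S.$$ Fix $p,q\in[1,\infty]$ with $1/p+1/q=1$; $\|\cdot\|_p$ is the $\ell^p$ norm on $\mathbb{C}^V$ and on $\mathbb{C}^{R\times S}$. Define $\mu_p=\alpha_0\max_{v\in V}\|G_0^{v;V}\|_{\ell^q(V)}$ (when $\mu_p\|\eta\|_p<1$ the series $\sum_jK_j(\eta,\dots,\eta)$ converges). Inverse Born operators: given $\mathcal K_1$, define multilinear maps $\mathcal K_j:(\mathbb{C}^{R\times S})^j\to\mathbb{C}^V$ for $j\ge2$ by $$\mathcal K_j(\phi_1,\dots,\phi_j)=-\sum_{m=1}^{j-1}\ \sum_{\substack{i_1+\dots+i_m=j\\ i_l\ge1}}\mathcal K_m\Big(K_{i_1}(\mathcal K_1\phi_1,\dots,\mathcal K_1\phi_{i_1}),\,K_{i_2}(\mathcal K_1\phi_{i_1+1},\dots,\mathcal K_1\phi_{i_1+i_2}),\dots,K_{i_m}(\mathcal K_1\phi_{j-i_m+1},\dots,\mathcal K_1\phi_j)\Big).$$ *)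

theory Defs
  imports Complex_Main "HOL-Library.Extended_Real"
begin

text \<open>Vectors in C^V are functions 'a => complex (only values on V matter);
  elements of C^(R x S) are functions 'a => 'a => complex (only values on R x S matter);
  G0 is a function 'a => 'a => complex (only values on (V u dV) x (V u dV) matter).\<close>

definition lpnorm :: "'a set \<Rightarrow> ereal \<Rightarrow> ('a \<Rightarrow> complex) \<Rightarrow> real" where
  "lpnorm V p x =
     (if p = \<infinity> then Max (insert 0 ((\<lambda>v. cmod (x v)) ` V))
      else (\<Sum>v\<in>V. cmod (x v) powr real_of_ereal p) powr (1 / real_of_ereal p))"

text \<open>Hoelder conjugate exponent q with 1/p + 1/q = 1.\<close>
definition conj_exp :: "ereal \<Rightarrow> ereal" where
  "conj_exp p = (if p = 1 then \<infinity> else if p = \<infinity> then 1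
                 else ereal (real_of_ereal p / (real_of_ereal p - 1)))"

definition mu :: "'a set \<Rightarrow> real \<Rightarrow> ('a \<Rightarrow> 'a \<Rightarrow> complex) \<Rightarrow> ereal \<Rightarrow> real" where
  "mu V \<alpha>0 G0 p = \<alpha>0 * Max (insert 0 ((\<lambda>v. lpnorm V (conj_exp p) (G0 v)) ` V))"

text \<open>born_chain x [eta1,...,etaj] y =
  G0^{x;V} D_eta1 G0^{V;V} D_eta2 ... G0^{V;V} D_etaj G0^{V;y}.\<close>
fun born_chain :: "'a set \<Rightarrow> ('a \<Rightarrow> 'a \<Rightarrow> complex) \<Rightarrow> 'a \<Rightarrow> ('a \<Rightarrow> complex) list \<Rightarrow> 'a \<Rightarrow> complex" where
  "born_chain V G0 x [] y = G0 x y"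
| "born_chain V G0 x (\<eta> # \<eta>s) y = (\<Sum>v\<in>V. G0 x v * \<eta> v * born_chain V G0 v \<eta>s y)"

text \<open>Forward Born operator K_j, j = length of the argument list.\<close>
definition born :: "'a set \<Rightarrow> real \<Rightarrow> ('a \<Rightarrow> 'a \<Rightarrow> complex) \<Rightarrow> ('a \<Rightarrow> complex) list \<Rightarrow> 'a \<Rightarrow> 'a \<Rightarrow> complex" where
  "born V \<alpha>0 G0 \<eta>s r s =
     (-1) ^ (length \<eta>s + 1) * complex_of_real \<alpha>0 ^ length \<eta>s * born_chain V G0 r \<eta>s s"

fun blocks :: "nat list \<Rightarrow> 'b list \<Rightarrow> 'b list list" where
  "blocks [] xs = []"
| "blocks (i # c) xs = take i xs # blocks c (drop i xs)"

lemma length_blocks [simp]: "length (blocks c xs) = length c"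
  by (induction c arbitrary: xs) auto

definition compositions :: "nat \<Rightarrow> nat list set" where
  "compositions j = {c. sum_list c = j \<and> (\<forall>i\<in>set c. 1 \<le> i)}"

function inv_born :: "'a set \<Rightarrow> real \<Rightarrow> ('a \<Rightarrow> 'a \<Rightarrow> complex)
    \<Rightarrow> (('a \<Rightarrow> 'a \<Rightarrow> complex) \<Rightarrow> ('a \<Rightarrow> complex))
    \<Rightarrow> ('a \<Rightarrow> 'a \<Rightarrow> complex) list \<Rightarrow> 'a \<Rightarrow> complex" where
  "inv_born V \<alpha>0 G0 K1inv \<phi>s =
     (if length \<phi>s = 1 then K1inv (hd \<phi>s)
      else if length \<phi>s < 2 then (\<lambda>_. 0)
      else (\<lambda>v. - (\<Sum>c\<in>{c \<in> compositions (length \<phi>s). 1 \<le> length c \<and> length c \<le> length \<phi>s - 1}.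
              inv_born V \<alpha>0 G0 K1inv
                (map (\<lambda>blk. born V \<alpha>0 G0 (map K1inv blk)) (blocks c \<phi>s)) v)))"
  by pat_completeness auto
termination
  by (relation "measure (\<lambda>(V, \<alpha>0, G0, K1inv, \<phi>s). length \<phi>s)") auto

end

theory Submission imports Defs "HOL-Analysis.Convex" begin


lemma prod_list_map_mult:
  "prod_list (map (\<lambda>x. f x * g x) xs) = prod_list (map f xs) * (prod_list (map g xs) :: real)"
  by (induction xs) auto

lemma prod_list_concat_map:
  "prod_list (map f (concat xss)) = prod_list (map (\<lambda>xs. prod_list (map f xs)) xss) "
  for f :: "'b \<Rightarrow> real"
  by (induction xss) auto

lemma prod_list_mono_map:
  assumes "\<And>x. x \<in> set xs \<Longrightarrow> 0 \<le> f x \<and> f x \<le> (g x :: real)"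
  shows "prod_list (map f xs) \<le> prod_list (map g xs)"
  using assms
proof (induction xs)
  case Nil then show ?case by simp
next
  case (Cons a xs)
  have "0 \<le> prod_list (map f xs)" using Cons.prems
    by (intro prod_list_nonneg) auto
  moreover have "0 \<le> f a" "f a \<le> g a" using Cons.prems by auto
  ultimately show ?case using Cons.IH Cons.prems by (simp add: mult_mono order.trans[of 0 "f a" "g a"])
qed

lemma prod_list_nonneg_map:
  assumes "\<And>x. x \<in> set xs \<Longrightarrow> 0 \<le> (f x :: real)"
  shows "0 \<le> prod_list (map f xs)"
  using assms by (intro prod_list_nonneg) auto

lemma concat_blocks: "sum_list c = length xs \<Longrightarrow> concat (blocks c xs) = xs"
proof (induction c arbitrary: xs)
  case Nil then show ?case by simp
next
  case (Cons i c)
  then show ?case by (simp add: min_def)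
qed

lemma map_length_blocks: "sum_list c = length xs \<Longrightarrow> map length (blocks c xs) = c"
proof (induction c arbitrary: xs)
  case Nil then show ?case by simp
next
  case (Cons i c)
  then show ?case by (simp add: min_def)
qed

lemma blocks_replicate: "sum_list c = n \<Longrightarrow> blocks c (replicate n x) = map (\<lambda>i. replicate i x) c"
proof (induction c arbitrary: n)
  case Nil then show ?case by simp
next
  case (Cons i c)
  then show ?case using Cons.IH[of "n-i"] by (simp add: min_def)
qed

lemma blocks_slot:
  "length xs < sum_list c \<Longrightarrow> \<exists>B1 pre post B2. \<forall>u. blocks c (xs @ [u] @ ys) = B1 @ [pre @ [u] @ post] @ B2"
proof (induction c arbitrary: xs)
  case Nil then show ?case by simp
next
  case (Cons i c)
  show ?case
  proof (cases "length xs < i")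
    case True
    have "\<forall>u. blocks (i # c) (xs @ [u] @ ys) =
       [] @ [xs @ [u] @ take (i - length xs - 1) ys] @ blocks c (drop (i - length xs - 1) ys)"
      using True by (auto simp: take_append drop_append take_Cons' drop_Cons')
    then show ?thesis by blast
  next
    case False
    then have "length (drop i xs) < sum_list c" using Cons.prems by simp
    from Cons.IH[OF this] obtain B1 pre post B2 where
      h: "\<forall>u. blocks c (drop i xs @ [u] @ ys) = B1 @ [pre @ [u] @ post] @ B2" by blast
    have "\<forall>u. blocks (i # c) (xs @ [u] @ ys) = (take i xs # B1) @ [pre @ [u] @ post] @ B2"
      using False h by (simp add: take_append drop_append)
    then show ?thesis by blast
  qed
qed

lemma compositions_finite: "finite (compositions n)"
proof -
  have "compositions n \<subseteq> {xs. set xs \<subseteq> {0..n} \<and> length xs \<le> n}"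
  proof
    fix c assume "c \<in> compositions n"
    then have s: "sum_list c = n" and p: "\<forall>i\<in>set c. 1 \<le> i" by (auto simp: compositions_def)
    have "length c \<le> sum_list c" using p
    proof (induction c) qed auto
    moreover have "set c \<subseteq> {0..n}" using s member_le_sum_list by fastforce
    ultimately show "c \<in> {xs. set xs \<subseteq> {0..n} \<and> length xs \<le> n}" using s by auto
  qed
  then show ?thesis using finite_lists_length_le[of "{0..n}" n] finite_subset by blast
qed

lemma length_le_sum_list: "\<forall>i\<in>set c. 1 \<le> i \<Longrightarrow> length c \<le> sum_list (c :: nat list)"
  by (induction c) auto

lemma length_eq_sum_list: "\<forall>i\<in>set c. 1 \<le> i \<Longrightarrow> length c = sum_list (c::nat list) \<Longrightarrow> c = replicate (length c) 1"
proof (induction c)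
  case Nil then show ?case by simp
next
  case (Cons a c)
  have "length c \<le> sum_list c" using Cons.prems by (intro length_le_sum_list) auto
  then have "a = 1" "length c = sum_list c" using Cons.prems by auto
  then show ?case using Cons by auto
qed

lemma born_chain_cong:
  "list_all2 (\<lambda>\<eta> \<eta>'. \<forall>v\<in>V. \<eta> v = \<eta>' v) \<eta>s \<eta>s' \<Longrightarrow> born_chain V G0 x \<eta>s y = born_chain V G0 x \<eta>s' y"
proof (induction \<eta>s arbitrary: \<eta>s' x)
  case Nil then show ?case by simp
next
  case (Cons a \<eta>s)
  then obtain b bs where "\<eta>s' = b # bs" "\<forall>v\<in>V. a v = b v" "list_all2 (\<lambda>\<eta> \<eta>'. \<forall>v\<in>V. \<eta> v = \<eta>' v) \<eta>s bs"
    by (cases \<eta>s') auto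
  then show ?case using Cons.IH by (auto intro!: sum.cong)
qed

lemma born_cong:
  "list_all2 (\<lambda>\<eta> \<eta>'. \<forall>v\<in>V. \<eta> v = \<eta>' v) \<eta>s \<eta>s' \<Longrightarrow> born V \<alpha>0 G0 \<eta>s = born V \<alpha>0 G0 \<eta>s'"
  by (auto simp: born_def fun_eq_iff list_all2_lengthD intro!: born_chain_cong)

lemma born_chain_slot:
  "born_chain V G0 x (xs @ [\<lambda>v. c * z v + w v] @ ys) y
     = c * born_chain V G0 x (xs @ [z] @ ys) y + born_chain V G0 x (xs @ [w] @ ys) y"
proof (induction xs arbitrary: x)
  case Nil then show ?case
    by (simp add: algebra_simps sum.distrib sum_distrib_left)
next
  case (Cons a xs)
  then show ?case by (simp add: algebra_simps sum.distrib sum_distrib_left)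
qed

lemma born_slot:
  assumes "\<forall>v\<in>V. u v = c * z v + w v"
  shows "born V \<alpha>0 G0 (xs @ [u] @ ys)
     = (\<lambda>r s. c * born V \<alpha>0 G0 (xs @ [z] @ ys) r s + born V \<alpha>0 G0 (xs @ [w] @ ys) r s)"
proof -
  have "born V \<alpha>0 G0 (xs @ [u] @ ys) = born V \<alpha>0 G0 (xs @ [\<lambda>v. c * z v + w v] @ ys)"
    using assms by (intro born_cong) (auto simp: list_all2_append list_all2_refl)
  also have "\<dots> = (\<lambda>r s. c * born V \<alpha>0 G0 (xs @ [z] @ ys) r s + born V \<alpha>0 G0 (xs @ [w] @ ys) r s)"
    unfolding born_def born_chain_slot by (simp add: fun_eq_iff algebra_simps)
  finally show ?thesis .
qed


definition Cset :: "nat \<Rightarrow> nat list set" where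
  "Cset n = {c \<in> compositions n. 1 \<le> length c \<and> length c \<le> n - 1}"

declare inv_born.simps[simp del]

lemma IB_1: "inv_born V \<alpha>0 G0 L [\<psi>] = L \<psi>"
  by (subst inv_born.simps) simp

lemma IB_0: "inv_born V \<alpha>0 G0 L [] = (\<lambda>_. 0)"
  by (subst inv_born.simps) simp

lemma IB_rec: "2 \<le> length \<psi>s \<Longrightarrow> inv_born V \<alpha>0 G0 L \<psi>s =
  (\<lambda>v. - (\<Sum>c\<in>Cset (length \<psi>s).
      inv_born V \<alpha>0 G0 L (map (\<lambda>blk. born V \<alpha>0 G0 (map L blk)) (blocks c \<psi>s)) v))"
  by (subst inv_born.simps) (simp add: Cset_def)

definition MRS :: "'a set \<Rightarrow> 'a set \<Rightarrow> ('a \<Rightarrow> 'a \<Rightarrow> complex) \<Rightarrow> real" where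
  "MRS R S \<psi> = Max (insert 0 ((\<lambda>(r,s). cmod (\<psi> r s)) ` (R \<times> S)))"

definition supV :: "'a set \<Rightarrow> ('a \<Rightarrow> complex) \<Rightarrow> real" where
  "supV V \<eta> = Max (insert 0 ((\<lambda>v. cmod (\<eta> v)) ` V))"

lemma MRS_nonneg: "finite R \<Longrightarrow> finite S \<Longrightarrow> 0 \<le> MRS R S \<psi>"
  unfolding MRS_def by (rule Max_ge) auto

lemma MRS_ge: "finite R \<Longrightarrow> finite S \<Longrightarrow> r \<in> R \<Longrightarrow> s \<in> S \<Longrightarrow> cmod (\<psi> r s) \<le> MRS R S \<psi>"
  unfolding MRS_def by (rule Max_ge) force+

lemma MRS_le: "finite R \<Longrightarrow> finite S \<Longrightarrow> 0 \<le> B \<Longrightarrow> (\<And>r s. r \<in> R \<Longrightarrow> s \<in> S \<Longrightarrow> cmod (\<psi> r s) \<le> B)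
   \<Longrightarrow> MRS R S \<psi> \<le> B"
  unfolding MRS_def by (subst Max_le_iff) auto

lemma supV_nonneg: "finite V \<Longrightarrow> 0 \<le> supV V \<eta>"
  unfolding supV_def by (rule Max_ge) auto

lemma supV_ge: "finite V \<Longrightarrow> v \<in> V \<Longrightarrow> cmod (\<eta> v) \<le> supV V \<eta>"
  unfolding supV_def by (rule Max_ge) force+

lemma supV_le: "finite V \<Longrightarrow> 0 \<le> B \<Longrightarrow> (\<And>v. v \<in> V \<Longrightarrow> cmod (\<eta> v) \<le> B) \<Longrightarrow> supV V \<eta> \<le> B"
  unfolding supV_def by (subst Max_le_iff) auto

locale setting =
  fixes V dV R S :: "'a set" and \<alpha>0 :: real and G0 :: "'a \<Rightarrow> 'a \<Rightarrow> complex"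
    and L :: "('a \<Rightarrow> 'a \<Rightarrow> complex) \<Rightarrow> ('a \<Rightarrow> complex)"
  assumes finV: "finite V" and findV: "finite dV" and RdV: "R \<subseteq> dV" and SdV: "S \<subseteq> dV"
    and Lcong: "\<And>\<phi> \<psi>. (\<forall>r\<in>R. \<forall>s\<in>S. \<phi> r s = \<psi> r s) \<Longrightarrow> (\<forall>v\<in>V. L \<phi> v = L \<psi> v)"
    and Llin: "\<And>\<phi> \<psi> c. \<forall>v\<in>V. L (\<lambda>r s. c * \<phi> r s + \<psi> r s) v = c * L \<phi> v + L \<psi> v"
    and Linv: "\<And>\<eta>. \<forall>v\<in>V. L (born V \<alpha>0 G0 [\<eta>]) v = \<eta> v"
    and apos: "0 < \<alpha>0"
begin

abbreviation IB where "IB \<equiv> inv_born V \<alpha>0 G0 L"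
abbreviation fB where "fB \<equiv> (\<lambda>blk. born V \<alpha>0 G0 (map L blk))"

lemma fB_slot:
  "fB (pre @ [\<lambda>r s. a * z r s + w r s] @ post) = (\<lambda>r s. a * fB (pre @ [z] @ post) r s + fB (pre @ [w] @ post) r s)"
proof -
  have "fB (pre @ [\<lambda>r s. a * z r s + w r s] @ post)
     = born V \<alpha>0 G0 (map L pre @ [L (\<lambda>r s. a * z r s + w r s)] @ map L post)" by simp
  also have "\<dots> = (\<lambda>r s. a * born V \<alpha>0 G0 (map L pre @ [L z] @ map L post) r s
                    + born V \<alpha>0 G0 (map L pre @ [L w] @ map L post) r s)"
    by (rule born_slot) (use Llin in blast)
  finally show ?thesis by simp
qed

lemma IB_slot:
  "v \<in> V \<Longrightarrow> IB (xs @ [\<lambda>r s. a * z r s + w r s] @ ys) v = a * IB (xs @ [z] @ ys) v + IB (xs @ [w] @ ys) v"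
proof (induction "length (xs @ ys)" arbitrary: xs ys z w a v rule: less_induct)
  case less
  show ?case
  proof (cases "xs = [] \<and> ys = []")
    case True
    then show ?thesis using Llin less.prems by (simp add: IB_1)
  next
    case False
    define n where "n = length (xs @ ys) + 1"
    have n2: "2 \<le> n" using False by (cases xs; cases ys) (auto simp: n_def)
    have key: "IB (map fB (blocks cc (xs @ [\<lambda>r s. a * z r s + w r s] @ ys))) v
       = a * IB (map fB (blocks cc (xs @ [z] @ ys))) v + IB (map fB (blocks cc (xs @ [w] @ ys))) v"
      if cc: "cc \<in> Cset n" for cc
    proof -
      have "sum_list cc = n" "length cc \<le> n - 1" using cc by (auto simp: Cset_def compositions_def)
      then have "length xs < sum_list cc" by (simp add: n_def)
      from blocks_slot[OF this, of ys] obtain B1 pre post B2 where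
        hB: "\<forall>u. blocks cc (xs @ [u] @ ys) = B1 @ [pre @ [u] @ post] @ B2" by blast
      have lenc: "length cc = length (B1 @ [pre @ [z] @ post] @ B2)"
        using arg_cong[OF spec[OF hB, of z], of length] by (simp del: append.simps append_Cons)
      have lt: "length (map fB B1 @ map fB B2) < length (xs @ ys)"
        using lenc \<open>length cc \<le> n - 1\<close> n2 by (simp add: n_def)
      have e: "\<And>u. map fB (blocks cc (xs @ [u] @ ys)) = map fB B1 @ [fB (pre @ [u] @ post)] @ map fB B2"
        using hB by simp
      show ?thesis
        unfolding e fB_slot
        using less.hyps[where xs="map fB B1" and ys="map fB B2" and z="fB (pre @ [z] @ post)" and w="fB (pre @ [w] @ post)" and a=a and v=v, OF lt] less.prems
        by blast
    qed
    have L1: "length (xs @ [\<lambda>r s. a * z r s + w r s] @ ys) = n"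
      "length (xs @ [z] @ ys) = n" "length (xs @ [w] @ ys) = n" by (auto simp: n_def)
    have ks: "(\<Sum>cc\<in>Cset n. IB (map fB (blocks cc (xs @ [\<lambda>r s. a * z r s + w r s] @ ys))) v)
       = (\<Sum>cc\<in>Cset n. a * IB (map fB (blocks cc (xs @ [z] @ ys))) v + IB (map fB (blocks cc (xs @ [w] @ ys))) v)"
      by (rule sum.cong[OF refl key])
    show ?thesis
      unfolding IB_rec[OF n2[folded L1(1)]] IB_rec[OF n2[folded L1(2)]] IB_rec[OF n2[folded L1(3)]]
      unfolding L1
      unfolding ks by (simp add: sum.distrib sum_distrib_left)
  qed
qed


lemma IB_zero_slot: "v \<in> V \<Longrightarrow> IB (xs @ [\<lambda>r s. 0] @ ys) v = 0"
  using IB_slot[of v xs 1 "\<lambda>r s. 0" "\<lambda>r s. 0" ys] by simp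

lemma IB_sum_slot:
  assumes "finite I" "v \<in> V"
  shows "IB (xs @ [\<lambda>r s. \<Sum>i\<in>I. Q i r s] @ ys) v = (\<Sum>i\<in>I. IB (xs @ [Q i] @ ys) v)"
  using assms(1)
proof (induction I rule: finite_induct)
  case empty
  then show ?case using IB_zero_slot[OF assms(2)] by simp
next
  case (insert x F)
  have e: "(\<lambda>r s. \<Sum>i\<in>insert x F. Q i r s) = (\<lambda>r s. 1 * Q x r s + (\<lambda>r s. \<Sum>i\<in>F. Q i r s) r s)"
    using insert by simp
  show ?case unfolding e IB_slot[OF assms(2)] using insert by simp
qed

lemma lists_Suc_eq:
  "{c. set c \<subseteq> I \<and> length c = Suc j} = (\<lambda>(i,c). i # c) ` (I \<times> {c. set c \<subseteq> I \<and> length c = j})"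
  by (auto simp: length_Suc_conv image_iff)

lemma IB_expand:
  assumes "finite I" "v \<in> V"
  shows "IB (xs @ replicate j (\<lambda>r s. \<Sum>i\<in>I. Q i r s)) v = (\<Sum>c\<in>{c. set c \<subseteq> I \<and> length c = j}. IB (xs @ map Q c) v)"
proof (induction j arbitrary: xs)
  case 0
  have "{c. set c \<subseteq> I \<and> length c = 0} = {[]}" by auto
  then show ?case by simp
next
  case (Suc j)
  have "IB (xs @ replicate (Suc j) (\<lambda>r s. \<Sum>i\<in>I. Q i r s)) v
      = IB (xs @ [\<lambda>r s. \<Sum>i\<in>I. Q i r s] @ replicate j (\<lambda>r s. \<Sum>i\<in>I. Q i r s)) v" by simp
  also have "\<dots> = (\<Sum>i\<in>I. IB ((xs @ [Q i]) @ replicate j (\<lambda>r s. \<Sum>i\<in>I. Q i r s)) v)"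
    using IB_sum_slot[OF assms] by simp
  also have "\<dots> = (\<Sum>i\<in>I. \<Sum>c\<in>{c. set c \<subseteq> I \<and> length c = j}. IB ((xs @ [Q i]) @ map Q c) v)"
    using Suc.IH[of "xs @ [Q _]"] by (intro sum.cong) auto
  also have "\<dots> = (\<Sum>(i,c)\<in>I \<times> {c. set c \<subseteq> I \<and> length c = j}. IB (xs @ map Q (i # c)) v)"
    by (subst sum.cartesian_product) simp
  also have "\<dots> = (\<Sum>c\<in>{c. set c \<subseteq> I \<and> length c = Suc j}. IB (xs @ map Q c) v)"
    unfolding lists_Suc_eq by (subst sum.reindex) (auto simp: inj_on_def case_prod_beta)
  finally show ?case .
qed

lemma finR: "finite R" using RdV findV finite_subset by blast
lemma finS: "finite S" using SdV findV finite_subset by blast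

abbreviation "M \<equiv> MRS R S"

lemma L_sum: "finite X \<Longrightarrow> v \<in> V \<Longrightarrow> L (\<lambda>r s. \<Sum>x\<in>X. Q x r s) v = (\<Sum>x\<in>X. L (Q x) v)"
  using IB_sum_slot[of X v "[]" Q "[]"] by (simp add: IB_1)

lemma L_smult: "v \<in> V \<Longrightarrow> L (\<lambda>r s. c * \<phi> r s) v = c * L \<phi> v"
  using Llin[of c \<phi> "\<lambda>r s. 0"] IB_zero_slot[of v "[]" "[]"] by (simp add: IB_1)

lemma L_bound: "\<exists>CL\<ge>0. \<forall>\<psi>. \<forall>v\<in>V. cmod (L \<psi> v) \<le> CL * M \<psi>"
proof -
  define E where "E = (\<lambda>x::'a\<times>'a. \<lambda>r' s'. if (r', s') = x then (1::complex) else 0)"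
  define CL where "CL = (\<Sum>v\<in>V. \<Sum>x\<in>R\<times>S. cmod (L (E x) v))"
  have fin: "finite (R \<times> S)" using finR finS by simp
  have "cmod (L \<psi> v) \<le> CL * M \<psi>" if v: "v \<in> V" for \<psi> v
  proof -
    have "\<forall>r\<in>R. \<forall>s\<in>S. \<psi> r s = (\<Sum>x\<in>R\<times>S. \<psi> (fst x) (snd x) * E x r s)"
    proof (intro ballI)
      fix r s assume "r \<in> R" "s \<in> S"
      then have "(\<Sum>x\<in>R\<times>S. \<psi> (fst x) (snd x) * E x r s) = (\<Sum>x\<in>R\<times>S. if x = (r,s) then \<psi> r s else 0)"
        by (intro sum.cong) (auto simp: E_def)
      also have "\<dots> = \<psi> r s" using fin \<open>r \<in> R\<close> \<open>s \<in> S\<close> by simp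
      finally show "\<psi> r s = (\<Sum>x\<in>R\<times>S. \<psi> (fst x) (snd x) * E x r s)" by simp
    qed
    then have "L \<psi> v = L (\<lambda>r s. \<Sum>x\<in>R\<times>S. \<psi> (fst x) (snd x) * E x r s) v"
      using Lcong[of \<psi> "\<lambda>r s. \<Sum>x\<in>R\<times>S. \<psi> (fst x) (snd x) * E x r s"] v by blast
    also have "\<dots> = (\<Sum>x\<in>R\<times>S. \<psi> (fst x) (snd x) * L (E x) v)"
      by (simp add: L_sum[OF fin v] L_smult[OF v])
    finally have "cmod (L \<psi> v) \<le> (\<Sum>x\<in>R\<times>S. cmod (\<psi> (fst x) (snd x)) * cmod (L (E x) v))"
      by (simp add: norm_mult[symmetric] norm_sum)
    also have "\<dots> \<le> (\<Sum>x\<in>R\<times>S. M \<psi> * cmod (L (E x) v))"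
      by (intro sum_mono mult_right_mono) (auto intro!: MRS_ge finR finS)
    also have "\<dots> = M \<psi> * (\<Sum>x\<in>R\<times>S. cmod (L (E x) v))" by (simp add: sum_distrib_left)
    also have "\<dots> \<le> M \<psi> * CL" unfolding CL_def
      by (intro mult_left_mono member_le_sum[OF v]) (auto intro!: sum_nonneg MRS_nonneg finR finS finV)
    finally show ?thesis by (simp add: mult.commute)
  qed
  moreover have "0 \<le> CL" unfolding CL_def by (auto intro!: sum_nonneg)
  ultimately show ?thesis by blast
qed


abbreviation "W \<equiv> V \<union> dV"
definition "gG = Max (insert 0 ((\<lambda>(x,y). cmod (G0 x y)) ` (W \<times> W)))"

lemma gG_nonneg: "0 \<le> gG"
  unfolding gG_def by (rule Max_ge) (auto intro: finV findV)

lemma gG_ge: "x \<in> W \<Longrightarrow> y \<in> W \<Longrightarrow> cmod (G0 x y) \<le> gG"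
  unfolding gG_def by (rule Max_ge) (force intro: finV findV)+

lemma chain_sup:
  "x \<in> W \<Longrightarrow> y \<in> W \<Longrightarrow> cmod (born_chain V G0 x \<eta>s y)
     \<le> gG * (gG * card V) ^ length \<eta>s * prod_list (map (supV V) \<eta>s)"
proof (induction \<eta>s arbitrary: x)
  case Nil then show ?case by (simp add: gG_ge)
next
  case (Cons \<eta> \<eta>s)
  define B where "B = gG * (gG * card V) ^ length \<eta>s * prod_list (map (supV V) \<eta>s)"
  have "cmod (born_chain V G0 x (\<eta> # \<eta>s) y) \<le> (\<Sum>v\<in>V. cmod (G0 x v * \<eta> v * born_chain V G0 v \<eta>s y))"
    by (simp add: norm_sum)
  also have "\<dots> \<le> (\<Sum>v\<in>V. gG * supV V \<eta> * B)"
  proof (intro sum_mono)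
    fix v assume v: "v \<in> V"
    have "cmod (G0 x v * \<eta> v * born_chain V G0 v \<eta>s y)
       = cmod (G0 x v) * cmod (\<eta> v) * cmod (born_chain V G0 v \<eta>s y)" by (simp add: norm_mult)
    also have "\<dots> \<le> gG * supV V \<eta> * B"
    proof -
      have h1: "cmod (G0 x v) \<le> gG" using gG_ge[of x v] v Cons.prems by auto
      have h2: "cmod (\<eta> v) \<le> supV V \<eta>" using supV_ge[OF finV v] .
      have h3: "cmod (born_chain V G0 v \<eta>s y) \<le> B" unfolding B_def using Cons.IH[of v] v Cons.prems by auto
      show ?thesis
        by (intro mult_mono h1 h2 h3 mult_nonneg_nonneg gG_nonneg supV_nonneg finV norm_ge_zero)
    qed
    finally show "cmod (G0 x v * \<eta> v * born_chain V G0 v \<eta>s y) \<le> gG * supV V \<eta> * B" .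
  qed
  also have "\<dots> = gG * (gG * card V) ^ length (\<eta> # \<eta>s) * prod_list (map (supV V) (\<eta> # \<eta>s))"
    by (simp add: B_def mult_ac)
  finally show ?case .
qed

lemma born_sup:
  "r \<in> W \<Longrightarrow> s \<in> W \<Longrightarrow> cmod (born V \<alpha>0 G0 \<eta>s r s)
     \<le> \<alpha>0 ^ length \<eta>s * (gG * (gG * card V) ^ length \<eta>s * prod_list (map (supV V) \<eta>s))"
proof -
  assume rs: "r \<in> W" "s \<in> W"
  have "cmod (born V \<alpha>0 G0 \<eta>s r s) = \<alpha>0 ^ length \<eta>s * cmod (born_chain V G0 r \<eta>s s)"
    using apos by (simp add: born_def norm_mult norm_power)
  also have "\<dots> \<le> \<alpha>0 ^ length \<eta>s * (gG * (gG * card V) ^ length \<eta>s * prod_list (map (supV V) \<eta>s))"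
    using chain_sup[OF rs, of \<eta>s] apos by (intro mult_left_mono) auto
  finally show ?thesis .
qed

lemma supV_L: "\<exists>CL\<ge>0. \<forall>\<psi>. supV V (L \<psi>) \<le> CL * M \<psi>"
proof -
  obtain CL where CL: "CL \<ge> 0" "\<forall>\<psi>. \<forall>v\<in>V. cmod (L \<psi> v) \<le> CL * M \<psi>" using L_bound by blast
  have "supV V (L \<psi>) \<le> CL * M \<psi>" for \<psi>
    using CL MRS_nonneg[OF finR finS, of \<psi>] by (intro supV_le finV) auto
  then show ?thesis using CL by blast
qed

lemma fB_bound: "\<exists>Bb. (\<forall>i. 0 \<le> Bb i) \<and> (\<forall>blk. M (fB blk) \<le> Bb (length blk) * prod_list (map M blk))"
proof -
  obtain CL where CL: "CL \<ge> 0" "\<forall>\<psi>. supV V (L \<psi>) \<le> CL * M \<psi>" using supV_L by blast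
  define Bb where "Bb i = \<alpha>0 ^ i * (gG * (gG * card V) ^ i * CL ^ i)" for i
  have "M (fB blk) \<le> Bb (length blk) * prod_list (map M blk)" for blk
  proof (rule MRS_le[OF finR finS])
    show "0 \<le> Bb (length blk) * prod_list (map M blk)" unfolding Bb_def using apos gG_nonneg CL
      by (intro mult_nonneg_nonneg prod_list_nonneg_map) (auto intro!: MRS_nonneg finR finS)
    fix r s assume "r \<in> R" "s \<in> S"
    then have rs: "r \<in> W" "s \<in> W" using RdV SdV by auto
    have h1: "cmod (fB blk r s) \<le> \<alpha>0 ^ length blk * (gG * (gG * card V) ^ length blk * prod_list (map (supV V) (map L blk)))"
      using born_sup[OF rs, of "map L blk"] by simp
    have h2: "prod_list (map (supV V) (map L blk)) \<le> prod_list (map (\<lambda>\<psi>. CL * M \<psi>) blk)"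
      unfolding map_map o_def using CL(2) supV_nonneg[OF finV] by (intro prod_list_mono_map) blast
    have h3: "prod_list (map (\<lambda>\<psi>. CL * M \<psi>) blk) = CL ^ length blk * prod_list (map M blk)"
      by (induction blk) auto
    have h4: "\<alpha>0 ^ length blk * (gG * (gG * card V) ^ length blk * prod_list (map (supV V) (map L blk)))
       \<le> \<alpha>0 ^ length blk * (gG * (gG * card V) ^ length blk * (CL ^ length blk * prod_list (map M blk)))"
      using h2 apos gG_nonneg unfolding h3 by (intro mult_left_mono mult_nonneg_nonneg) auto
    show "cmod (fB blk r s) \<le> Bb (length blk) * prod_list (map M blk)"
      using order.trans[OF h1 h4] by (simp add: Bb_def mult_ac)
  qed
  moreover have "\<forall>i. 0 \<le> Bb i" unfolding Bb_def using apos gG_nonneg CL by simp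
  ultimately show ?thesis by blast
qed


lemma IB_bound: "\<exists>C\<ge>0. \<forall>\<psi>s. length \<psi>s = n \<longrightarrow> (\<forall>v\<in>V. cmod (IB \<psi>s v) \<le> C * prod_list (map M \<psi>s))"
proof (induction n rule: less_induct)
  case (less n)
  consider "n = 0" | "n = 1" | "2 \<le> n" by linarith
  then show ?case
  proof cases
    case 1 then show ?thesis by (auto simp: IB_0)
  next
    case 2
    obtain CL where CL: "CL \<ge> 0" "\<forall>\<psi>. \<forall>v\<in>V. cmod (L \<psi> v) \<le> CL * M \<psi>" using L_bound by blast
    have "\<forall>\<psi>s. length \<psi>s = n \<longrightarrow> (\<forall>v\<in>V. cmod (IB \<psi>s v) \<le> CL * prod_list (map M \<psi>s))"
      using CL 2 by (auto simp: length_Suc_conv IB_1)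
    then show ?thesis using CL by blast
  next
    case 3
    have "\<forall>m. \<exists>C. m < n \<longrightarrow> (C \<ge> 0 \<and> (\<forall>\<psi>s. length \<psi>s = m \<longrightarrow> (\<forall>v\<in>V. cmod (IB \<psi>s v) \<le> C * prod_list (map M \<psi>s))))"
      using less.IH by blast
    from choice[OF this] obtain Cf where Cf: "\<And>m. m < n \<Longrightarrow> Cf m \<ge> 0 \<and> (\<forall>\<psi>s. length \<psi>s = m \<longrightarrow> (\<forall>v\<in>V. cmod (IB \<psi>s v) \<le> Cf m * prod_list (map M \<psi>s)))"
      by blast
    obtain Bb where Bb: "\<forall>i. 0 \<le> Bb i" "\<forall>blk. M (fB blk) \<le> Bb (length blk) * prod_list (map M blk)"
      using fB_bound by blast
    define C where "C = (\<Sum>c\<in>Cset n. Cf (length c) * prod_list (map Bb c))"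
    have Mnn: "\<And>\<psi>. 0 \<le> M \<psi>" using MRS_nonneg[OF finR finS] .
    have "cmod (IB \<psi>s v) \<le> C * prod_list (map M \<psi>s)" if len: "length \<psi>s = n" and v: "v \<in> V" for \<psi>s v
    proof -
      have per: "cmod (IB (map fB (blocks c \<psi>s)) v) \<le> Cf (length c) * (prod_list (map Bb c) * prod_list (map M \<psi>s))"
        if c: "c \<in> Cset n" for c
      proof -
        have sc: "sum_list c = length \<psi>s" and lc: "length c < n"
          using c len 3 by (auto simp: Cset_def compositions_def)
        have b1: "cmod (IB (map fB (blocks c \<psi>s)) v) \<le> Cf (length c) * prod_list (map M (map fB (blocks c \<psi>s)))"
        proof -
          have "length (map fB (blocks c \<psi>s)) = length c" by simp
          from conjunct2[OF Cf[OF lc], rule_format, OF this v] show ?thesis .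
        qed
        have "prod_list (map M (map fB (blocks c \<psi>s)))
           \<le> prod_list (map (\<lambda>blk. Bb (length blk) * prod_list (map M blk)) (blocks c \<psi>s))"
          unfolding map_map o_def using Bb(2) Mnn by (intro prod_list_mono_map) blast
        also have "\<dots> = prod_list (map Bb (map length (blocks c \<psi>s))) * prod_list (map M (concat (blocks c \<psi>s)))"
          by (simp add: prod_list_map_mult prod_list_concat_map o_def)
        also have "\<dots> = prod_list (map Bb c) * prod_list (map M \<psi>s)"
          by (simp only: map_length_blocks[OF sc] concat_blocks[OF sc])
        finally have "prod_list (map M (map fB (blocks c \<psi>s))) \<le> prod_list (map Bb c) * prod_list (map M \<psi>s)" .
        then show ?thesis using b1 Cf[OF lc] by (meson mult_left_mono order.trans)
      qed
      have "cmod (IB \<psi>s v) = cmod (\<Sum>c\<in>Cset n. IB (map fB (blocks c \<psi>s)) v)"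
        using IB_rec[of \<psi>s] len 3 by simp
      also have "\<dots> \<le> (\<Sum>c\<in>Cset n. cmod (IB (map fB (blocks c \<psi>s)) v))" by (rule norm_sum)
      also have "\<dots> \<le> (\<Sum>c\<in>Cset n. Cf (length c) * (prod_list (map Bb c) * prod_list (map M \<psi>s)))"
        by (rule sum_mono) (rule per)
      also have "\<dots> = C * prod_list (map M \<psi>s)" unfolding C_def
        by (simp add: sum_distrib_right mult.assoc)
      finally show ?thesis .
    qed
    moreover have "0 \<le> C" unfolding C_def
    proof (intro sum_nonneg mult_nonneg_nonneg prod_list_nonneg_map)
      fix c assume "c \<in> Cset n"
      then show "0 \<le> Cf (length c)" using Cf[of "length c"] 3 by (auto simp: Cset_def)
    qed (use Bb in auto)
    ultimately show ?thesis by blast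
  qed
qed

lemma comp_insert: "1 \<le> n \<Longrightarrow> compositions n = insert (replicate n 1) (Cset n)"
proof (intro set_eqI iffI)
  fix c assume n: "1 \<le> n" and c: "c \<in> compositions n"
  then have p: "\<forall>i\<in>set c. 1 \<le> i" and s: "sum_list c = n" by (auto simp: compositions_def)
  have "length c \<le> n" using length_le_sum_list[OF p] s by simp
  moreover have "c \<noteq> []" using s n by auto
  then have "1 \<le> length c" by (cases c) auto
  ultimately show "c \<in> insert (replicate n 1) (Cset n)"
    using length_eq_sum_list[OF p] s c by (cases "length c = n") (auto simp: Cset_def)
next
  fix c assume n: "1 \<le> n" and c: "c \<in> insert (replicate n 1) (Cset n)"
  then show "c \<in> compositions n" by (auto simp: Cset_def compositions_def sum_list_replicate)
qed

lemma IB_identity: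
  assumes v: "v \<in> V" and n: "2 \<le> n"
  shows "(\<Sum>c\<in>compositions n. IB (map (\<lambda>i. born V \<alpha>0 G0 (replicate i \<eta>)) c) v) = 0"
proof -
  define K where "K = (\<lambda>i. born V \<alpha>0 G0 (replicate i \<eta>))"
  define \<Phi> where "\<Phi> = born V \<alpha>0 G0 [\<eta>]"
  have nin: "replicate n 1 \<notin> Cset n" using n by (auto simp: Cset_def)
  have fin: "finite (Cset n)" using compositions_finite[of n] by (simp add: Cset_def)
  have mK: "map K (replicate n 1) = replicate n \<Phi>" by (simp add: K_def \<Phi>_def)
  have blk: "map fB (blocks c (replicate n \<Phi>)) = map K c" if "c \<in> Cset n" for c
  proof -
    have "sum_list c = n" using that by (auto simp: Cset_def compositions_def)
    then have "map fB (blocks c (replicate n \<Phi>)) = map (\<lambda>i. born V \<alpha>0 G0 (replicate i (L \<Phi>))) c"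
      by (simp add: blocks_replicate)
    also have "\<dots> = map K c" unfolding K_def
      using Linv[of \<eta>] by (intro map_cong refl born_cong) (auto simp: \<Phi>_def list_all2_iff set_zip)
    finally show ?thesis .
  qed
  have "IB (replicate n \<Phi>) v = - (\<Sum>c\<in>Cset n. IB (map K c) v)"
    using IB_rec[of "replicate n \<Phi>"] n blk by simp
  moreover have ci: "compositions n = insert (replicate n 1) (Cset n)" using n by (intro comp_insert) simp
  moreover have "(\<Sum>c\<in>compositions n. IB (map K c) v) = IB (map K (replicate n 1)) v + (\<Sum>c\<in>Cset n. IB (map K c) v)"
    unfolding ci by (rule sum.insert[OF fin nin])
  ultimately show ?thesis unfolding K_def[symmetric] mK by simp
qed

lemma IB_identity1:
  assumes v: "v \<in> V"
  shows "(\<Sum>c\<in>compositions 1. IB (map (\<lambda>i. born V \<alpha>0 G0 (replicate i \<eta>)) c) v) = \<eta> v"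
proof -
  have "Cset 1 = {}" by (auto simp: Cset_def)
  then have "compositions 1 = {[1]}" using comp_insert[of 1] by simp
  then show ?thesis using Linv v by (simp add: IB_1)
qed

end


lemma ereal_ge1_cases:
  assumes "1 \<le> (p::ereal)"
  obtains "p = \<infinity>" | P where "p = ereal P" "1 \<le> P"
  using assms by (cases p) auto

lemma lpnorm_nonneg: "finite V \<Longrightarrow> 0 \<le> lpnorm V p x"
  unfolding lpnorm_def by (auto intro: Max_ge)

lemma lp_ge:
  assumes V: "finite V" and p: "1 \<le> p" and v: "v \<in> V"
  shows "cmod (x v) \<le> lpnorm V p x"
  using p
proof (cases rule: ereal_ge1_cases)
  case 1 then show ?thesis unfolding lpnorm_def using V v by (auto intro: Max_ge)
next
  case (2 P)
  have "cmod (x v) = (cmod (x v) powr P) powr (1 / P)" using 2 by (simp add: powr_powr)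
  also have "\<dots> \<le> (\<Sum>w\<in>V. cmod (x w) powr P) powr (1 / P)"
    using 2 V v by (intro powr_mono2 member_le_sum) auto
  finally show ?thesis using 2 by (simp add: lpnorm_def)
qed

lemma lp_le:
  assumes V: "finite V" and p: "1 \<le> p" and B: "0 \<le> B" and h: "\<And>v. v \<in> V \<Longrightarrow> cmod (x v) \<le> B"
  shows "lpnorm V p x \<le> (real (card V) + 1) * B"
  using p
proof (cases rule: ereal_ge1_cases)
  case 1
  have "Max (insert 0 ((\<lambda>v. cmod (x v)) ` V)) \<le> B" using V B h by (subst Max_le_iff) auto
  also have "B \<le> (real (card V) + 1) * B" using B by (simp add: algebra_simps)
  finally show ?thesis using 1 by (simp add: lpnorm_def)
next
  case (2 P)
  define D where "D = real (card V) + 1"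
  have D1: "1 \<le> D" by (simp add: D_def)
  have "(\<Sum>w\<in>V. cmod (x w) powr P) \<le> (\<Sum>w\<in>V. B powr P)"
    using h 2 by (intro sum_mono powr_mono2) auto
  also have "\<dots> = real (card V) * B powr P" by simp
  also have "\<dots> \<le> D powr P * B powr P"
  proof (intro mult_right_mono)
    have "real (card V) \<le> D" by (simp add: D_def)
    also have "D = D powr 1" using D1 by simp
    also have "\<dots> \<le> D powr P" using D1 2 by (intro powr_mono) auto
    finally show "real (card V) \<le> D powr P" .
  qed simp
  also have "\<dots> = (D * B) powr P" by (simp add: powr_mult)
  finally have s: "(\<Sum>w\<in>V. cmod (x w) powr P) \<le> (D * B) powr P" .
  have "(\<Sum>w\<in>V. cmod (x w) powr P) powr (1 / P) \<le> ((D * B) powr P) powr (1 / P)"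
    using s 2 by (intro powr_mono2) (auto intro: sum_nonneg)
  also have "\<dots> = D * B" using 2 D1 B by (simp add: powr_powr)
  finally show ?thesis using 2 by (simp add: lpnorm_def D_def)
qed

lemma holder_real:
  fixes f g :: "'a \<Rightarrow> real"
  assumes V: "finite V" and PQ: "1 < P" "1 < Q" "1 / P + 1 / Q = 1"
    and fg: "\<And>v. 0 \<le> f v" "\<And>v. 0 \<le> g v"
  shows "(\<Sum>v\<in>V. f v * g v) \<le> (\<Sum>v\<in>V. f v powr Q) powr (1 / Q) * (\<Sum>v\<in>V. g v powr P) powr (1 / P)"
proof -
  define A where "A = (\<Sum>v\<in>V. f v powr Q) powr (1 / Q)"
  define B where "B = (\<Sum>v\<in>V. g v powr P) powr (1 / P)"
  have SA: "0 \<le> (\<Sum>v\<in>V. f v powr Q)" and SB: "0 \<le> (\<Sum>v\<in>V. g v powr P)" by (auto intro: sum_nonneg)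
  show ?thesis
  proof (cases "A = 0 \<or> B = 0")
    case True
    then have "(\<forall>v\<in>V. f v = 0) \<or> (\<forall>v\<in>V. g v = 0)"
      unfolding A_def B_def using V by (auto simp: sum_nonneg_eq_0_iff)
    then have "(\<Sum>v\<in>V. f v * g v) = 0" by auto
    then show ?thesis using True A_def B_def by simp
  next
    case False
    have A0: "0 < A" "0 < B" using False by (auto simp: A_def B_def)
    have AQ: "A powr Q = (\<Sum>v\<in>V. f v powr Q)" using PQ SA by (simp add: A_def powr_powr)
    have BP: "B powr P = (\<Sum>v\<in>V. g v powr P)" using PQ SB by (simp add: B_def powr_powr)
    have "(\<Sum>v\<in>V. (f v / A) * (g v / B)) \<le> (\<Sum>v\<in>V. (f v / A) powr Q / Q + (g v / B) powr P / P)"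
      using PQ fg A0 by (intro sum_mono) (metis Youngs_inequality add.commute less_eq_real_def divide_nonneg_pos)
    also have "\<dots> = (\<Sum>v\<in>V. f v powr Q) / A powr Q / Q + (\<Sum>v\<in>V. g v powr P) / B powr P / P"
      by (simp add: powr_divide sum.distrib sum_divide_distrib)
    also have "\<dots> = 1"
    proof -
      have "A powr Q \<noteq> 0" "B powr P \<noteq> 0" using A0 by auto
      then show ?thesis using AQ BP PQ by (simp add: add.commute)
    qed
    finally have "(\<Sum>v\<in>V. (f v / A) * (g v / B)) \<le> 1" .
    moreover have "(\<Sum>v\<in>V. (f v / A) * (g v / B)) = (\<Sum>v\<in>V. f v * g v) / (A * B)"
      by (simp add: sum_divide_distrib)
    ultimately show ?thesis using A0 by (simp add: A_def[symmetric] B_def[symmetric] pos_divide_le_eq)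
  qed
qed

lemma holder:
  assumes V: "finite V" and p: "1 \<le> p"
  shows "(\<Sum>v\<in>V. cmod (a v) * cmod (b v)) \<le> lpnorm V (conj_exp p) a * lpnorm V p b"
  using p
proof (cases rule: ereal_ge1_cases)
  case 1
  have "(\<Sum>v\<in>V. cmod (a v) * cmod (b v)) \<le> (\<Sum>v\<in>V. cmod (a v) * Max (insert 0 ((\<lambda>v. cmod (b v)) ` V)))"
    using V by (intro sum_mono mult_left_mono Max_ge) auto
  also have "\<dots> = (\<Sum>v\<in>V. cmod (a v)) * Max (insert 0 ((\<lambda>v. cmod (b v)) ` V))"
    by (simp add: sum_distrib_right)
  moreover have "0 \<le> (\<Sum>v\<in>V. cmod (a v))" by (intro sum_nonneg) auto
  ultimately show ?thesis using 1 by (simp add: lpnorm_def conj_exp_def)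
next
  case (2 P)
  show ?thesis
  proof (cases "P = 1")
    case True
    have "(\<Sum>v\<in>V. cmod (a v) * cmod (b v)) \<le> (\<Sum>v\<in>V. Max (insert 0 ((\<lambda>v. cmod (a v)) ` V)) * cmod (b v))"
      using V by (intro sum_mono mult_right_mono Max_ge) auto
    also have "\<dots> = Max (insert 0 ((\<lambda>v. cmod (a v)) ` V)) * (\<Sum>v\<in>V. cmod (b v))"
      by (simp add: sum_distrib_left)
    moreover have "0 \<le> (\<Sum>v\<in>V. cmod (b v))" by (intro sum_nonneg) auto
    ultimately show ?thesis using 2 True by (simp add: lpnorm_def conj_exp_def one_ereal_def)
  next
    case False
    define Q where "Q = P / (P - 1)"
    have P1: "1 < P" using 2 False by simp
    have Q1: "1 < Q" using P1 by (simp add: Q_def)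
    have PQ: "1 / P + 1 / Q = 1" using P1 by (simp add: Q_def field_simps)
    have ce: "conj_exp p = ereal Q" using 2 False by (simp add: conj_exp_def Q_def one_ereal_def)
    show ?thesis
      using holder_real[OF V P1 Q1 PQ, of "\<lambda>v. cmod (a v)" "\<lambda>v. cmod (b v)"] 2 ce
      by (simp add: lpnorm_def)
  qed
qed


lemma mu_bound: "finite V \<Longrightarrow> 0 < \<alpha>0 \<Longrightarrow> x \<in> V \<Longrightarrow> \<alpha>0 * lpnorm V (conj_exp p) (G0 x) \<le> mu V \<alpha>0 G0 p"
  unfolding mu_def by (intro mult_left_mono Max_ge) auto

lemma mu_nonneg: "finite V \<Longrightarrow> 0 < \<alpha>0 \<Longrightarrow> 0 \<le> mu V \<alpha>0 G0 p"
  unfolding mu_def by (intro mult_nonneg_nonneg Max_ge) auto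

lemma chain_mu:
  assumes V: "finite V" and p: "1 \<le> p" and a: "0 < \<alpha>0" and g: "0 \<le> g" "\<forall>v\<in>V. cmod (G0 v y) \<le> g"
  shows "x \<in> V \<Longrightarrow> cmod (born_chain V G0 x (replicate j \<eta>) y) \<le> g * (mu V \<alpha>0 G0 p / \<alpha>0 * lpnorm V p \<eta>) ^ j"
proof (induction j arbitrary: x)
  case 0 then show ?case using g by simp
next
  case (Suc j)
  define X where "X = g * (mu V \<alpha>0 G0 p / \<alpha>0 * lpnorm V p \<eta>) ^ j"
  have X0: "0 \<le> X" unfolding X_def using g mu_nonneg[OF V a] lpnorm_nonneg[OF V] a by auto
  have "cmod (born_chain V G0 x (replicate (Suc j) \<eta>) y) \<le> (\<Sum>v\<in>V. cmod (G0 x v * \<eta> v * born_chain V G0 v (replicate j \<eta>) y))"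
    by (simp add: norm_sum)
  also have "\<dots> \<le> (\<Sum>v\<in>V. cmod (G0 x v) * cmod (\<eta> v) * X)"
    unfolding norm_mult X_def using Suc.IH by (intro sum_mono mult_left_mono) auto
  also have "\<dots> = X * (\<Sum>v\<in>V. cmod (G0 x v) * cmod (\<eta> v))" by (simp add: sum_distrib_left mult_ac)
  also have "\<dots> \<le> X * (lpnorm V (conj_exp p) (G0 x) * lpnorm V p \<eta>)"
    using holder[OF V p, of "G0 x" \<eta>] X0 by (intro mult_left_mono) auto
  also have "\<dots> \<le> X * (mu V \<alpha>0 G0 p / \<alpha>0 * lpnorm V p \<eta>)"
    using mu_bound[of V \<alpha>0 x p G0, OF V a Suc.prems] a X0 lpnorm_nonneg[OF V]
    by (intro mult_left_mono mult_right_mono) (auto simp: pos_le_divide_eq mult.commute)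
  also have "\<dots> = g * (mu V \<alpha>0 G0 p / \<alpha>0 * lpnorm V p \<eta>) ^ Suc j" by (simp add: X_def mult_ac)
  finally show ?case .
qed

lemma born_mu:
  assumes V: "finite V" and p: "1 \<le> p" and a: "0 < \<alpha>0" and g: "0 \<le> g" "\<forall>v\<in>V. cmod (G0 v s) \<le> g"
    and gR: "lpnorm V (conj_exp p) (G0 r) \<le> gR"
  shows "cmod (born V \<alpha>0 G0 (replicate (Suc j) \<eta>) r s)
     \<le> \<alpha>0 * gR * g * lpnorm V p \<eta> * (mu V \<alpha>0 G0 p * lpnorm V p \<eta>) ^ j"
proof -
  define t where "t = lpnorm V p \<eta>"
  define \<mu> where "\<mu> = mu V \<alpha>0 G0 p"
  define X where "X = g * (\<mu> / \<alpha>0 * t) ^ j"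
  have t0: "0 \<le> t" unfolding t_def using lpnorm_nonneg[OF V] .
  have X0: "0 \<le> X" unfolding X_def \<mu>_def using g mu_nonneg[OF V a] t0 a by auto
  have "cmod (born_chain V G0 r (replicate (Suc j) \<eta>) s) \<le> (\<Sum>v\<in>V. cmod (G0 r v * \<eta> v * born_chain V G0 v (replicate j \<eta>) s))"
    by (simp add: norm_sum)
  also have "\<dots> \<le> (\<Sum>v\<in>V. cmod (G0 r v) * cmod (\<eta> v) * X)"
    unfolding norm_mult X_def \<mu>_def t_def using chain_mu[of V p \<alpha>0 g G0 s, OF V p a g]
    by (intro sum_mono mult_left_mono) auto
  also have "\<dots> = X * (\<Sum>v\<in>V. cmod (G0 r v) * cmod (\<eta> v))" by (simp add: sum_distrib_left mult_ac)
  also have "\<dots> \<le> X * (gR * t)"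
    using holder[OF V p, of "G0 r" \<eta>] X0 gR t0 unfolding t_def
    by (intro mult_left_mono) (auto intro: order.trans mult_right_mono)
  finally have c: "cmod (born_chain V G0 r (replicate (Suc j) \<eta>) s) \<le> X * (gR * t)" .
  have "cmod (born V \<alpha>0 G0 (replicate (Suc j) \<eta>) r s) = \<alpha>0 ^ Suc j * cmod (born_chain V G0 r (replicate (Suc j) \<eta>) s)"
    using a by (simp add: born_def norm_mult norm_power)
  also have "\<dots> \<le> \<alpha>0 ^ Suc j * (X * (gR * t))" using c a by (intro mult_left_mono) auto
  also have "\<dots> = \<alpha>0 * gR * g * t * (\<mu> * t) ^ j"
    using a by (simp add: X_def power_mult_distrib power_divide field_simps)
  finally show ?thesis unfolding t_def \<mu>_def .
qed



lemma prodb: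
  "\<forall>i\<in>set c. 1 \<le> i \<Longrightarrow> prod_list (map (\<lambda>i. K * x ^ (i - 1)) c) = K ^ length c * (x::real) ^ (sum_list c - length c)"
proof (induction c)
  case Nil then show ?case by simp
next
  case (Cons i c)
  have "length c \<le> sum_list c" using Cons.prems by (intro length_le_sum_list) auto
  moreover have "1 \<le> i" using Cons.prems by auto
  ultimately have e: "sum_list (i # c) - length (i # c) = (i - 1) + (sum_list c - length c)" by simp
  have "prod_list (map (\<lambda>i. K * x ^ (i - 1)) (i # c)) = K * x ^ (i - 1) * (K ^ length c * x ^ (sum_list c - length c))"
    using Cons by simp
  also have "\<dots> = K ^ length (i # c) * x ^ ((i - 1) + (sum_list c - length c))" by (simp add: power_add mult_ac)
  also have "\<dots> = K ^ length (i # c) * x ^ (sum_list (i # c) - length (i # c))" unfolding e ..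
  finally show ?case .
qed

lemma pow_ineq:
  fixes k t \<mu> :: real
  assumes "0 \<le> k" "0 \<le> t" "0 \<le> \<mu>" "\<mu> * t \<le> 1" "m \<le> N" "N < n"
  shows "(k * t) ^ m * (\<mu> * t) ^ (n - m) \<le> k ^ m * \<mu> ^ (N + 1 - m) * t ^ (N + 1)"
proof -
  have e: "n - m = (N + 1 - m) + (n - N - 1)" using assms by simp
  have "(\<mu> * t) ^ (n - m) = (\<mu> * t) ^ (N + 1 - m) * (\<mu> * t) ^ (n - N - 1)" unfolding e power_add ..
  also have "\<dots> \<le> (\<mu> * t) ^ (N + 1 - m) * 1"
    using assms by (intro mult_left_mono power_le_one) auto
  finally have h: "(\<mu> * t) ^ (n - m) \<le> (\<mu> * t) ^ (N + 1 - m)" by simp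
  have "(k * t) ^ m * (\<mu> * t) ^ (n - m) \<le> (k * t) ^ m * (\<mu> * t) ^ (N + 1 - m)"
    using h assms by (intro mult_left_mono) auto
  also have "\<dots> = k ^ m * \<mu> ^ (N + 1 - m) * (t ^ m * t ^ (N + 1 - m))"
    by (simp add: power_mult_distrib mult_ac)
  also have "t ^ m * t ^ (N + 1 - m) = t ^ (N + 1)"
    using assms by (simp add: power_add[symmetric])
  finally show ?thesis by simp
qed

lemma sum_shift1: "(\<Sum>i=1..N. g i) = (\<Sum>j<N. g (Suc j))"
  by (induction N) auto


theorem mainTheorem8:
  fixes V dV R S :: "'a set" and \<alpha>0 :: real and G0 :: "'a \<Rightarrow> 'a \<Rightarrow> complex"
    and p :: ereal
    and K1inv :: "('a \<Rightarrow> 'a \<Rightarrow> complex) \<Rightarrow> ('a \<Rightarrow> complex)"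
    and N :: nat and a :: real
  assumes "finite V" "finite dV" "V \<inter> dV = {}"
    and "R \<subseteq> dV" "S \<subseteq> dV" "R \<noteq> {}" "S \<noteq> {}"
    and "\<alpha>0 > 0"
    and "1 \<le> p"
    \<comment> \<open>K1inv is a well-defined map C^(R x S) -> C^V (depends only on values on R x S)\<close>
    and "\<And>\<phi> \<psi>. (\<forall>r\<in>R. \<forall>s\<in>S. \<phi> r s = \<psi> r s) \<Longrightarrow> (\<forall>v\<in>V. K1inv \<phi> v = K1inv \<psi> v)"
    \<comment> \<open>K1inv is linear\<close>
    and "\<And>\<phi> \<psi> c. \<forall>v\<in>V. K1inv (\<lambda>r s. c * \<phi> r s + \<psi> r s) v = c * K1inv \<phi> v + K1inv \<psi> v"
    \<comment> \<open>K_1 : C^V -> C^(R x S) is injective\<close>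
    and "\<And>\<eta> \<eta>'. (\<forall>r\<in>R. \<forall>s\<in>S. born V \<alpha>0 G0 [\<eta>] r s = born V \<alpha>0 G0 [\<eta>'] r s)
            \<Longrightarrow> (\<forall>v\<in>V. \<eta> v = \<eta>' v)"
    \<comment> \<open>K1inv is a left inverse of K_1\<close>
    and "\<And>\<eta>. \<forall>v\<in>V. K1inv (born V \<alpha>0 G0 [\<eta>]) v = \<eta> v"
    and "N \<ge> 1" and "0 < a" and "a < 1"
  shows "\<exists>C :: real. \<forall>\<eta> :: 'a \<Rightarrow> complex.
           mu V \<alpha>0 G0 p * lpnorm V p \<eta> < a \<longrightarrow>
           (let \<phi> = (\<lambda>r s. \<Sum>j. born V \<alpha>0 G0 (replicate (Suc j) \<eta>) r s)
            in lpnorm V p (\<lambda>v. \<eta> v - (\<Sum>j=1..N. inv_born V \<alpha>0 G0 K1inv (replicate j \<phi>) v))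
                 \<le> C * lpnorm V p \<eta> ^ (N + 1))"
proof -
  note A = assms
  interpret setting V dV R S \<alpha>0 G0 K1inv
    using A(1,2,4,5,8,10,11,13) by unfold_locales auto
  define \<mu> where "\<mu> = mu V \<alpha>0 G0 p"
  define gR where "gR = Max (insert 0 ((\<lambda>r. lpnorm V (conj_exp p) (G0 r)) ` R))"
  define k where "k = \<alpha>0 * gR * gG"
  define k' where "k' = k / (1 - a)"
  have \<mu>0: "0 \<le> \<mu>" unfolding \<mu>_def using mu_nonneg[OF finV apos] .
  have gR0: "0 \<le> gR" unfolding gR_def by (intro Max_ge) (auto intro: finR)
  have gRb: "\<And>r. r \<in> R \<Longrightarrow> lpnorm V (conj_exp p) (G0 r) \<le> gR"
    unfolding gR_def by (intro Max_ge) (auto intro: finR)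
  have k0: "0 \<le> k" unfolding k_def using apos gR0 gG_nonneg by auto
  have kk': "k \<le> k'" unfolding k'_def using k0 A(15,16) by (simp add: le_divide_eq mult_left_le)
  have k'0: "0 \<le> k'" using k0 kk' by linarith
  have "\<forall>m. \<exists>C. C \<ge> 0 \<and> (\<forall>\<psi>s. length \<psi>s = m \<longrightarrow> (\<forall>v\<in>V. cmod (IB \<psi>s v) \<le> C * prod_list (map M \<psi>s)))"
    using IB_bound by blast
  from choice[OF this] obtain Cf where Cf: "\<And>m. Cf m \<ge> 0"
    "\<And>\<psi>s v. v \<in> V \<Longrightarrow> cmod (IB \<psi>s v) \<le> Cf (length \<psi>s) * prod_list (map M \<psi>s)"
    by blast
  define I where "I = {1..N+1}"
  define U2 where "U2 = {c. set c \<subseteq> I \<and> 1 \<le> length c \<and> length c \<le> N \<and> N < sum_list c}"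
  define Ac where "Ac = (\<Sum>c\<in>U2. Cf (length c) * (k' ^ length c * \<mu> ^ (N + 1 - length c)))"
  define C where "C = (real (card V) + 1) * Ac"
  have finI: "finite I" unfolding I_def by simp
  have finU2: "finite U2"
    by (rule finite_subset[OF _ finite_lists_length_le[OF finI, of N]]) (auto simp: U2_def)
  have Ac0: "0 \<le> Ac" unfolding Ac_def using Cf(1) k'0 \<mu>0 by (intro sum_nonneg) auto
  show ?thesis
  proof (intro exI allI impI)
    fix \<eta> :: "'a \<Rightarrow> complex"
    assume small: "mu V \<alpha>0 G0 p * lpnorm V p \<eta> < a"
    define t where "t = lpnorm V p \<eta>"
    define x where "x = \<mu> * t"
    define \<phi> where "\<phi> = (\<lambda>r s. \<Sum>j. born V \<alpha>0 G0 (replicate (Suc j) \<eta>) r s)"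
    have t0: "0 \<le> t" unfolding t_def using lpnorm_nonneg[OF finV] .
    have x0: "0 \<le> x" unfolding x_def using t0 \<mu>0 by simp
    have xa: "x < a" using small unfolding x_def \<mu>_def t_def .
    have x1: "x < 1" using xa A(16) by simp
    show "let \<phi> = (\<lambda>r s. \<Sum>j. born V \<alpha>0 G0 (replicate (Suc j) \<eta>) r s)
            in lpnorm V p (\<lambda>v. \<eta> v - (\<Sum>j=1..N. inv_born V \<alpha>0 G0 K1inv (replicate j \<phi>) v))
                 \<le> C * lpnorm V p \<eta> ^ (N + 1)"
      unfolding Let_def \<phi>_def[symmetric] t_def[symmetric]
    proof -
      have Kb: "cmod (born V \<alpha>0 G0 (replicate (Suc j) \<eta>) r s) \<le> k * t * x ^ j" if rs: "r \<in> R" "s \<in> S" for j r s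
      proof -
        have "\<forall>v\<in>V. cmod (G0 v s) \<le> gG" using rs SdV by (auto intro!: gG_ge)
        from born_mu[of V p \<alpha>0 gG G0 s r gR j \<eta>, OF finV A(9) apos gG_nonneg this gRb[OF rs(1)]]
        show ?thesis by (simp add: k_def x_def \<mu>_def t_def)
      qed
      have sumg: "summable (\<lambda>j. c * x ^ j)" for c
        using x0 x1 by (intro summable_mult summable_geometric) simp
      have summ: "summable (\<lambda>j. born V \<alpha>0 G0 (replicate (Suc j) \<eta>) r s)" if rs: "r \<in> R" "s \<in> S" for r s
        by (rule summable_comparison_test[OF _ sumg[of "k * t"]]) (use Kb[OF rs] in auto)
      define \<tau> where "\<tau> = (\<lambda>r s. \<phi> r s - (\<Sum>i=1..N. born V \<alpha>0 G0 (replicate i \<eta>) r s))"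
      have taub: "cmod (\<tau> r s) \<le> k' * t * x ^ N" if rs: "r \<in> R" "s \<in> S" for r s
      proof -
        define f where "f = (\<lambda>j. born V \<alpha>0 G0 (replicate (Suc j) \<eta>) r s)"
        have "\<phi> r s = (\<Sum>n. f (n + N)) + sum f {..<N}"
          unfolding \<phi>_def f_def using suminf_split_initial_segment[OF summ[OF rs]] by simp
        moreover have "sum f {..<N} = (\<Sum>i=1..N. born V \<alpha>0 G0 (replicate i \<eta>) r s)"
          unfolding f_def sum_shift1 ..
        ultimately have te: "\<tau> r s = (\<Sum>n. f (n + N))" unfolding \<tau>_def by simp
        have "cmod (\<Sum>n. f (n + N)) \<le> (\<Sum>n. k * t * x ^ N * x ^ n)"
        proof (rule norm_suminf_le[OF _ sumg])
          fix n
          show "norm (f (n + N)) \<le> k * t * x ^ N * x ^ n"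
            using Kb[OF rs, of "n + N"] by (simp add: f_def power_add mult_ac)
        qed
        also have "(\<Sum>n. k * t * x ^ N * x ^ n) = k * t * x ^ N * (1 / (1 - x))"
          using x0 x1 by (subst suminf_mult[OF summable_geometric]) (auto simp: suminf_geometric)
        also have "\<dots> \<le> k' * t * x ^ N"
        proof -
          have "1 / (1 - x) \<le> 1 / (1 - a)" using xa A(16) by (intro divide_left_mono) auto
          then have "k * t * x ^ N * (1 / (1 - x)) \<le> k * t * x ^ N * (1 / (1 - a))"
            using k0 t0 x0 by (intro mult_left_mono) auto
          then show ?thesis by (simp add: k'_def)
        qed
        finally show ?thesis using te by simp
      qed
      define P where "P = (\<lambda>i. if i \<le> N then born V \<alpha>0 G0 (replicate i \<eta>) else \<tau>)"
      have phiP: "\<phi> = (\<lambda>r s. \<Sum>i\<in>I. P i r s)"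
      proof (intro ext)
        fix r s
        have "(\<Sum>i\<in>I. P i r s) = (\<Sum>i=1..N. P i r s) + P (Suc N) r s"
          unfolding I_def by (simp add: sum.cl_ivl_Suc)
        also have "(\<Sum>i=1..N. P i r s) = (\<Sum>i=1..N. born V \<alpha>0 G0 (replicate i \<eta>) r s)"
          by (intro sum.cong) (auto simp: P_def)
        finally show "\<phi> r s = (\<Sum>i\<in>I. P i r s)" by (simp add: P_def \<tau>_def)
      qed
      have bP: "M (P i) \<le> k' * t * x ^ (i - 1)" if i: "i \<in> I" for i
      proof (rule MRS_le[OF finR finS])
        show "0 \<le> k' * t * x ^ (i - 1)" using k'0 t0 x0 by simp
        fix r s assume rs: "r \<in> R" "s \<in> S"
        show "cmod (P i r s) \<le> k' * t * x ^ (i - 1)"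
        proof (cases "i \<le> N")
          case True
          then have "i = Suc (i - 1)" using i by (simp add: I_def)
          then have "cmod (P i r s) = cmod (born V \<alpha>0 G0 (replicate (Suc (i - 1)) \<eta>) r s)"
            using True by (simp add: P_def)
          also have "\<dots> \<le> k * t * x ^ (i - 1)" by (rule Kb[OF rs])
          also have "\<dots> \<le> k' * t * x ^ (i - 1)" using kk' t0 x0 by (intro mult_right_mono) auto
          finally show ?thesis .
        next
          case False
          then have "i = N + 1" using i by (simp add: I_def)
          then show ?thesis using taub[OF rs] False by (simp add: P_def)
        qed
      qed
      have expand: "IB (replicate j \<phi>) v = (\<Sum>c\<in>{c. set c \<subseteq> I \<and> length c = j}. IB (map P c) v)"
        if v: "v \<in> V" for j v
        using IB_expand[OF finI v, of "[]" j P] phiP by simp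
      define U where "U = {c. set c \<subseteq> I \<and> 1 \<le> length c \<and> length c \<le> N}"
      define U1 where "U1 = {c. set c \<subseteq> I \<and> 1 \<le> length c \<and> length c \<le> N \<and> sum_list c \<le> N}"
      have finU: "finite U"
        by (rule finite_subset[OF _ finite_lists_length_le[OF finI, of N]]) (auto simp: U_def)
      have UU: "U = (\<Union>j\<in>{1..N}. {c. set c \<subseteq> I \<and> length c = j})" by (auto simp: U_def)
      have sumU: "(\<Sum>j=1..N. IB (replicate j \<phi>) v) = (\<Sum>c\<in>U. IB (map P c) v)" if v: "v \<in> V" for v
        unfolding expand[OF v] UU
        by (rule sum.UNION_disjoint[symmetric]) (auto intro: finite_lists_length_eq[OF finI])
      have Us: "U = U1 \<union> U2" "U1 \<inter> U2 = {}" by (auto simp: U_def U1_def U2_def)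
      have finU1: "finite U1" "finite U2" using finU Us by auto
      have U1c: "U1 = (\<Union>n\<in>{1..N}. compositions n)"
      proof (intro set_eqI iffI)
        fix c assume c: "c \<in> U1"
        then have p: "\<forall>i\<in>set c. 1 \<le> i" by (auto simp: U1_def I_def)
        have "1 \<le> sum_list c" using length_le_sum_list[OF p] c by (auto simp: U1_def)
        then show "c \<in> (\<Union>n\<in>{1..N}. compositions n)" using c p by (auto simp: U1_def compositions_def)
      next
        fix c assume "c \<in> (\<Union>n\<in>{1..N}. compositions n)"
        then obtain n where n: "1 \<le> n" "n \<le> N" and c: "c \<in> compositions n" by auto
        then have p: "\<forall>i\<in>set c. 1 \<le> i" and sc: "sum_list c = n" by (auto simp: compositions_def)
        have "\<forall>i\<in>set c. i \<le> n" using sc member_le_sum_list by fastforce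
        then have "set c \<subseteq> I" using p n by (auto simp: I_def)
        moreover have "length c \<le> N" using length_le_sum_list[OF p] sc n by simp
        moreover have "c \<noteq> []" using sc n by auto
        ultimately show "c \<in> U1" using sc n by (cases c) (auto simp: U1_def)
      qed
      have sumU1: "(\<Sum>c\<in>U1. IB (map P c) v) = \<eta> v" if v: "v \<in> V" for v
      proof -
        have "(\<Sum>c\<in>U1. IB (map P c) v) = (\<Sum>n\<in>{1..N}. \<Sum>c\<in>compositions n. IB (map P c) v)"
          unfolding U1c
          by (rule sum.UNION_disjoint) (simp, simp add: compositions_finite, auto simp: compositions_def)
        also have "\<dots> = (\<Sum>n\<in>{1..N}. \<Sum>c\<in>compositions n. IB (map (\<lambda>i. born V \<alpha>0 G0 (replicate i \<eta>)) c) v)"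
        proof (intro sum.cong refl)
          fix n c assume n: "n \<in> {1..N}" and c: "c \<in> compositions n"
          then have "\<forall>i\<in>set c. i \<le> N" using member_le_sum_list by (fastforce simp: compositions_def)
          then have "map P c = map (\<lambda>i. born V \<alpha>0 G0 (replicate i \<eta>)) c" by (intro map_cong) (auto simp: P_def)
          then show "IB (map P c) v = IB (map (\<lambda>i. born V \<alpha>0 G0 (replicate i \<eta>)) c) v" by (simp only:)
        qed
        also have "\<dots> = \<eta> v"
        proof -
          have "{1..N} = insert 1 {2..N}" using A(14) by auto
          moreover have "(\<Sum>n\<in>{2..N}. \<Sum>c\<in>compositions n. IB (map (\<lambda>i. born V \<alpha>0 G0 (replicate i \<eta>)) c) v) = 0"
            using IB_identity[OF v] by (intro sum.neutral) auto
          ultimately show ?thesis using IB_identity1[OF v] by simp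
        qed
        finally show ?thesis .
      qed
      have bound2: "cmod (\<Sum>c\<in>U2. IB (map P c) v) \<le> Ac * t ^ (N + 1)" if v: "v \<in> V" for v
      proof -
        have "cmod (\<Sum>c\<in>U2. IB (map P c) v) \<le> (\<Sum>c\<in>U2. cmod (IB (map P c) v))" by (rule norm_sum)
        also have "\<dots> \<le> (\<Sum>c\<in>U2. Cf (length c) * (k' ^ length c * \<mu> ^ (N + 1 - length c)) * t ^ (N + 1))"
        proof (rule sum_mono)
          fix c assume c: "c \<in> U2"
          then have p: "\<forall>i\<in>set c. 1 \<le> i" and cI: "set c \<subseteq> I" and lc: "length c \<le> N" and sc: "N < sum_list c"
            by (auto simp: U2_def I_def)
          have h1: "cmod (IB (map P c) v) \<le> Cf (length c) * prod_list (map M (map P c))"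
            using Cf(2)[OF v, of "map P c"] by simp
          have "prod_list (map M (map P c)) \<le> prod_list (map (\<lambda>i. k' * t * x ^ (i - 1)) c)"
            unfolding map_map o_def using cI bP MRS_nonneg[OF finR finS]
            by (intro prod_list_mono_map) auto
          also have "\<dots> = (k' * t) ^ length c * (\<mu> * t) ^ (sum_list c - length c)"
            unfolding prodb[OF p] x_def ..
          also have "\<dots> \<le> k' ^ length c * \<mu> ^ (N + 1 - length c) * t ^ (N + 1)"
            by (rule pow_ineq[OF k'0 t0 \<mu>0 _ lc sc]) (use x1 in \<open>simp add: x_def\<close>)
          finally have h2: "prod_list (map M (map P c)) \<le> k' ^ length c * \<mu> ^ (N + 1 - length c) * t ^ (N + 1)" .
          have "Cf (length c) * prod_list (map M (map P c)) \<le> Cf (length c) * (k' ^ length c * \<mu> ^ (N + 1 - length c) * t ^ (N + 1))"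
            using h2 Cf(1) by (rule mult_left_mono)
          with h1 show "cmod (IB (map P c) v) \<le> Cf (length c) * (k' ^ length c * \<mu> ^ (N + 1 - length c)) * t ^ (N + 1)"
            by (simp add: mult_ac)
        qed
        also have "\<dots> = Ac * t ^ (N + 1)" unfolding Ac_def by (simp add: sum_distrib_right)
        finally show ?thesis .
      qed
      have Eb: "cmod (\<eta> v - (\<Sum>j=1..N. IB (replicate j \<phi>) v)) \<le> Ac * t ^ (N + 1)" if v: "v \<in> V" for v
      proof -
        have "(\<Sum>j=1..N. IB (replicate j \<phi>) v) = \<eta> v + (\<Sum>c\<in>U2. IB (map P c) v)"
          unfolding sumU[OF v] Us(1) sum.union_disjoint[OF finU1 Us(2)] sumU1[OF v] ..
        then show ?thesis using bound2[OF v] by simp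
      qed
      have "lpnorm V p (\<lambda>v. \<eta> v - (\<Sum>j=1..N. IB (replicate j \<phi>) v)) \<le> (real (card V) + 1) * (Ac * t ^ (N + 1))"
        by (rule lp_le[OF finV A(9)]) (use Ac0 t0 Eb in auto)
      then show "lpnorm V p (\<lambda>v. \<eta> v - (\<Sum>j=1..N. IB (replicate j \<phi>) v)) \<le> C * t ^ (N + 1)"
        by (simp add: C_def mult.assoc)
    qed
  qed
qed

end
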